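(* Assume $\nu>1/2$ and let $b,\theta>0$ be fixed. For any continuous function $F:\mathbb R\to[0,\infty)$ with $0<\int_{-\infty}^\infty F(x)\,dx<\infty$, as $\delta\to0$, $$\int_{-\pi}^{\pi}a^\delta_{b,\theta}(\lambda)\,F\!\Big(\frac{\lambda}{\delta\theta}\Big)d\lambda\sim\delta\theta\int_{-\infty}^{\infty}F(x)\,dx,\qquad \int_{-\pi}^{\pi}\big[a^\delta_{b,\theta}(\lambda)\big]^2F\!\Big(\frac{\lambda}{\delta\theta}\Big)d\lambda\sim\delta\theta\int_{-\infty}^{\infty}F(x)\,dx.$$
   Context: For $\alpha>0$, $\omega\in\mathbb R$ let $g^*_{\nu,\alpha}(\omega)=C_\nu\alpha^{2\nu}(\alpha^2+\omega^2)^{-(\nu+1/2)}$ with $C_\nu=\Gamma(\nu+\frac12)/(\sqrt\pi\,\Gamma(\nu))$. For $\delta,\theta>0$ and $\lambda\in[-\pi,\pi]$ let $g^\delta_{\nu,\theta}(\lambda)=\sum_{k\in\mathbb Z}g^*_{\nu,\delta\theta}(\lambda+2k\pi)$, and for $b>0$, $a^\delta_{b,\theta}=\dfrac{b\,g^\delta_{\nu,\theta}}{b\,g^\delta_{\nu,\theta}+(2\pi)^{-1}}$. "$\sim$" means the ratio tends to $1$. *)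

theory Defs
  imports "HOL-Analysis.Analysis" "HOL-Library.Landau_Symbols"
begin

definition C_nu :: "real \<Rightarrow> real" where
  "C_nu \<nu> = Gamma (\<nu> + 1/2) / (sqrt pi * Gamma \<nu>)"

definition g_star :: "real \<Rightarrow> real \<Rightarrow> real \<Rightarrow> real" where
  "g_star \<nu> \<alpha> \<omega> = C_nu \<nu> * \<alpha> powr (2*\<nu>) * (\<alpha>^2 + \<omega>^2) powr (-(\<nu> + 1/2))"

definition g_delta :: "real \<Rightarrow> real \<Rightarrow> real \<Rightarrow> real \<Rightarrow> real" where
  "g_delta \<nu> \<delta> \<theta> l = (\<Sum>\<^sub>\<infinity>k::int. g_star \<nu> (\<delta>*\<theta>) (l + 2 * of_int k * pi))"

definition a_delta :: "real \<Rightarrow> real \<Rightarrow> real \<Rightarrow> real \<Rightarrow> real \<Rightarrow> real" where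
  "a_delta \<nu> \<delta> b \<theta> l =
     b * g_delta \<nu> \<delta> \<theta> l / (b * g_delta \<nu> \<delta> \<theta> l + 1 / (2*pi))"

end

theory Submission
  imports Defs
begin

lemma term_bound:
  fixes \<alpha> \<nu> l :: real and k :: int
  assumes "\<nu> > 1/2" "\<bar>l\<bar> \<le> pi" "k \<noteq> 0"
  shows "(\<alpha>^2 + (l + 2 * of_int k * pi)^2) powr (-(\<nu>+1/2)) \<le> 2/(real_of_int k^2 + 1)"
proof -
  have k1: "1 \<le> \<bar>real_of_int k\<bar>" using assms(3) by linarith
  have "\<bar>real_of_int k\<bar> * pi \<le> 2 * \<bar>real_of_int k\<bar> * pi - pi"
    using k1 pi_gt3 by (simp add: algebra_simps)
  also have "\<dots> \<le> \<bar>l + 2 * of_int k * pi\<bar>"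
    using assms(2) pi_gt_zero by (simp add: abs_mult)
  finally have "\<bar>real_of_int k\<bar> * pi \<le> \<bar>l + 2 * of_int k * pi\<bar>" .
  moreover have "\<bar>real_of_int k\<bar> * 1 \<le> \<bar>real_of_int k\<bar> * pi"
    by (rule mult_left_mono) (use pi_gt3 in auto)
  ultimately have kk: "\<bar>real_of_int k\<bar> \<le> \<bar>l + 2 * of_int k * pi\<bar>" by linarith
  have ksq: "real_of_int k^2 \<le> (l + 2 * of_int k * pi)^2"
    using kk by (metis abs_ge_zero power2_abs power_mono)
  define B where "B = \<alpha>^2 + (l + 2 * of_int k * pi)^2"
  have B: "real_of_int k^2 \<le> B" using ksq unfolding B_def by (smt (verit) zero_le_power2)
  have "1 \<le> \<bar>real_of_int k\<bar>^2" using k1 by (rule one_le_power)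
  then have k2: "1 \<le> real_of_int k^2" by simp
  have B1: "1 \<le> B" using B k2 by linarith
  have "B powr (-(\<nu>+1/2)) \<le> B powr (-1)"
    using assms(1) B1 by (intro powr_mono) auto
  also have "\<dots> = 1 / B" using B1 by (simp add: powr_minus_divide)
  also have "\<dots> \<le> 1 / real_of_int k^2"
  proof (rule divide_left_mono)
    show "0 < B * real_of_int k^2" using B1 k2 by (intro mult_pos_pos) auto
  qed (use B in auto)
  also have "\<dots> \<le> 2/(real_of_int k^2 + 1)" using k2 by (simp add: divide_simps)
  finally show ?thesis unfolding B_def .
qed

lemma C_pos: "\<nu> > 0 \<Longrightarrow> C_nu \<nu> > 0"
  unfolding C_nu_def by (auto intro!: divide_pos_pos mult_pos_pos)

lemma sq_n: "summable (\<lambda>n::nat. 2/(real n^2 + 1))"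
proof (rule summable_comparison_test'[of "\<lambda>n::nat. 2 * inverse (real n ^ 2)" 1])
  show "summable (\<lambda>n::nat. 2 * inverse (real n ^ 2))"
    using inverse_power_summable[of 2, where 'a=real] by (intro summable_mult) auto
  fix n :: nat assume "n \<ge> 1"
  then show "norm (2/(real n^2 + 1)) \<le> 2 * inverse (real n ^ 2)"
    by (simp add: divide_simps) (smt (verit) zero_le_power2)
qed

lemma sq_n': "(\<lambda>n::nat. 2/(real n^2 + 1)) summable_on UNIV"
  using summable_on_UNIV_nonneg_real_iff[of "\<lambda>n::nat. 2/(real n^2+1)"] sq_n by simp

lemma sq_a: "(\<lambda>k::int. 2/(real_of_int k^2 + 1)) summable_on (range int)"
  by (rule iffD2[OF summable_on_reindex]) (use sq_n' in \<open>auto simp: o_def\<close>)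
lemma sq_b: "(\<lambda>k::int. 2/(real_of_int k^2 + 1)) summable_on (range (\<lambda>n. - int n))"
  by (rule iffD2[OF summable_on_reindex]) (use sq_n' in \<open>auto simp: o_def inj_on_def\<close>)

lemma summ_inv_sq: "(\<lambda>k::int. 2/(real_of_int k^2 + 1)) summable_on UNIV"
proof -
  have "UNIV = range int \<union> range (\<lambda>n. - int n)"
  proof (intro set_eqI iffI)
    fix k :: int
    show "k \<in> range int \<union> range (\<lambda>n. - int n)"
    proof (cases "k \<ge> 0")
      case True then have "k = int (nat k)" by simp
      then show ?thesis by blast
    next
      case False then have "k = - int (nat (-k))" by simp
      then show ?thesis by blast
    qed
  qed auto
  then show ?thesis using summable_on_union[OF sq_a sq_b] by simp
qed

lemma g_star_nonneg: "\<alpha> > 0 \<Longrightarrow> \<nu> > 0 \<Longrightarrow> g_star \<nu> \<alpha> w \<ge> 0"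
  unfolding g_star_def using C_pos[of \<nu>] by auto

lemma summ_terms:
  assumes "\<alpha> > 0" "\<nu> > 1/2" "\<bar>l\<bar> \<le> pi"
  shows "(\<lambda>k::int. g_star \<nu> \<alpha> (l + 2 * of_int k * pi)) summable_on UNIV"
proof -
  define M where "M = C_nu \<nu> * \<alpha> powr (2*\<nu>)"
  have M: "M \<ge> 0" unfolding M_def using C_pos[of \<nu>] assms by auto
  have "(\<lambda>k::int. g_star \<nu> \<alpha> (l + 2 * of_int k * pi)) summable_on (UNIV - {0})"
  proof (rule summable_on_comparison_test)
    show "(\<lambda>k::int. M * (2/(real_of_int k^2 + 1))) summable_on (UNIV - {0})"
      by (rule summable_on_subset[OF summable_on_cmult_right[OF summ_inv_sq]]) auto
    fix k :: int assume "k \<in> UNIV - {0}"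
    then show "g_star \<nu> \<alpha> (l + 2 * of_int k * pi) \<le> M * (2/(real_of_int k^2 + 1))"
      unfolding g_star_def M_def[symmetric] using term_bound[OF assms(2,3), of k \<alpha>] M
      by (intro mult_left_mono) auto
    show "0 \<le> g_star \<nu> \<alpha> (l + 2 * of_int k * pi)" using g_star_nonneg assms by auto
  qed
  then have "(\<lambda>k::int. g_star \<nu> \<alpha> (l + 2 * of_int k * pi)) summable_on insert 0 (UNIV - {0})"
    by (subst summable_on_insert_iff)
  then show ?thesis by (metis insert_Diff_single insert_UNIV)
qed

lemma g_delta_ge:
  assumes "\<delta>*\<theta> > 0" "\<nu> > 1/2" "\<bar>l\<bar> \<le> pi"
  shows "g_star \<nu> (\<delta>*\<theta>) l \<le> g_delta \<nu> \<delta> \<theta> l"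
proof -
  have "sum (\<lambda>k::int. g_star \<nu> (\<delta>*\<theta>) (l + 2 * of_int k * pi)) {0} \<le> g_delta \<nu> \<delta> \<theta> l"
    unfolding g_delta_def
    by (rule finite_sum_le_has_sum[OF has_sum_infsum[OF summ_terms[OF assms]]])
       (use g_star_nonneg assms in auto)
  then show ?thesis by simp
qed


lemma g_star_scale:
  assumes "\<alpha> > 0"
  shows "g_star \<nu> \<alpha> (\<alpha>*x) = C_nu \<nu> / \<alpha> * (1+x^2) powr (-(\<nu>+1/2))"
proof -
  have "\<alpha>^2 + (\<alpha>*x)^2 = \<alpha>^2 * (1+x^2)" by (simp add: algebra_simps power_mult_distrib)
  then have "(\<alpha>^2 + (\<alpha>*x)^2) powr (-(\<nu>+1/2)) = (\<alpha>^2) powr (-(\<nu>+1/2)) * (1+x^2) powr (-(\<nu>+1/2))"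
    by (simp add: powr_mult)
  also have "(\<alpha>^2) powr (-(\<nu>+1/2)) = \<alpha> powr (-(2*\<nu>+1))"
  proof -
    have "\<alpha>^2 = \<alpha> powr 2" using assms by (simp add: powr_numeral)
    then have "(\<alpha>^2) powr (-(\<nu>+1/2)) = \<alpha> powr (2 * (-(\<nu>+1/2)))" by (simp add: powr_powr)
    also have "2 * (-(\<nu>+1/2)) = -(2*\<nu>+1)" by simp
    finally show ?thesis .
  qed
  finally have e: "(\<alpha>^2 + (\<alpha>*x)^2) powr (-(\<nu>+1/2)) = \<alpha> powr (-(2*\<nu>+1)) * (1+x^2) powr (-(\<nu>+1/2))" .
  have "\<alpha> powr (2*\<nu>) * \<alpha> powr (-(2*\<nu>+1)) = \<alpha> powr (-1)"
    by (simp add: powr_add[symmetric])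
  also have "\<dots> = 1/\<alpha>" using assms by (simp add: powr_minus_divide)
  finally have f: "\<alpha> powr (2*\<nu>) * \<alpha> powr (-(2*\<nu>+1)) = 1/\<alpha>" .
  show ?thesis unfolding g_star_def e using f
    by (metis (no_types, lifting) ab_semigroup_mult_class.mult_ac(1) times_divide_eq_right mult.right_neutral)
qed

lemma one_minus_frac: "x + c > 0 \<Longrightarrow> 1 - x/(x+c) = c/(x+(c::real))"
  by (simp add: field_simps)

lemma a_bounds:
  assumes "\<delta>*\<theta> > 0" "\<nu> > 1/2" "\<bar>l\<bar> \<le> pi" "b > 0"
  shows "0 \<le> a_delta \<nu> \<delta> b \<theta> l" "a_delta \<nu> \<delta> b \<theta> l \<le> 1"
    "g_star \<nu> (\<delta>*\<theta>) l > 0 \<Longrightarrow> 1 - a_delta \<nu> \<delta> b \<theta> l \<le> (1/(2*pi)) / (b * g_star \<nu> (\<delta>*\<theta>) l)"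
proof -
  let ?G = "g_delta \<nu> \<delta> \<theta> l" and ?g = "g_star \<nu> (\<delta>*\<theta>) l"
  have g0: "?g \<ge> 0" using g_star_nonneg assms by auto
  have G: "?g \<le> ?G" by (rule g_delta_ge[OF assms(1-3)])
  have bG: "b * ?G \<ge> 0" using g0 G assms by auto
  have c: "1/(2*pi) > 0" by simp
  show "0 \<le> a_delta \<nu> \<delta> b \<theta> l" unfolding a_delta_def using bG c by auto
  have den: "b * ?G + 1/(2*pi) > 0" using bG c by linarith
  show "a_delta \<nu> \<delta> b \<theta> l \<le> 1" unfolding a_delta_def using den by (simp add: pos_divide_le_eq)
  assume gp: "?g > 0"
  have bGp: "b * ?G > 0" using gp G assms(4) by (intro mult_pos_pos) auto
  have "1 - a_delta \<nu> \<delta> b \<theta> l = (1/(2*pi)) / (b * ?G + 1/(2*pi))"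
    unfolding a_delta_def using den by (rule one_minus_frac)
  also have "\<dots> \<le> (1/(2*pi)) / (b * ?G)"
    using bGp den c mult_pos_pos[OF den bGp] by (intro divide_left_mono) simp_all
  also have "\<dots> \<le> (1/(2*pi)) / (b * ?g)"
  proof (rule divide_left_mono)
    show "b * ?g \<le> b * ?G" using G assms(4) by (intro mult_left_mono) auto
    show "0 < b * ?G * (b * ?g)" using bGp gp assms(4) G by (intro mult_pos_pos) auto
  qed (use c in simp)
  finally show "1 - a_delta \<nu> \<delta> b \<theta> l \<le> (1/(2*pi)) / (b * ?g)" .
qed


lemma ev_small:
  assumes "\<theta> > 0"
  shows "eventually (\<lambda>\<delta>::real. \<delta> > 0 \<and> \<bar>\<delta>*\<theta>*x\<bar> \<le> pi) (at_right 0)"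
proof -
  define e where "e = pi / (\<theta> * (\<bar>x\<bar> + 1))"
  have e: "e > 0" unfolding e_def using assms by (intro divide_pos_pos mult_pos_pos) auto
  have "\<bar>\<delta>*\<theta>*x\<bar> \<le> pi" if "\<delta> > 0" "\<delta> < e" for \<delta>
  proof -
    have "\<bar>\<delta>*\<theta>*x\<bar> = \<delta> * (\<theta> * \<bar>x\<bar>)" using that assms by (simp add: abs_mult)
    also have "\<dots> \<le> e * (\<theta> * (\<bar>x\<bar> + 1))"
      using that assms by (intro mult_mono) auto
    also have "\<dots> = pi" unfolding e_def using assms by (simp add: add_pos_nonneg)
    finally show ?thesis .
  qed
  then show ?thesis unfolding eventually_at_right_field using e by auto
qed

lemma a_lim:
  assumes "\<nu> > 1/2" "b > 0" "\<theta> > 0"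
  shows "((\<lambda>\<delta>. a_delta \<nu> \<delta> b \<theta> (\<delta>*\<theta>*x)) \<longlongrightarrow> 1) (at_right 0)"
proof (rule tendsto_sandwich)
  define P where "P = (1+x^2) powr (-(\<nu>+1/2))"
  define C where "C = C_nu \<nu>"
  have x1: "1 + x^2 > 0" by (simp add: add_pos_nonneg)
  have P: "P > 0" unfolding P_def using x1 by simp
  have C: "C > 0" unfolding C_def using C_pos assms by auto
  define K where "K = (1/(2*pi)) * \<theta> / (b * C * P)"
  show "((\<lambda>\<delta>. 1 - K * \<delta>) \<longlongrightarrow> 1) (at_right 0)"
    by (rule tendsto_eq_intros | simp)+
  show "((\<lambda>\<delta>. 1) \<longlongrightarrow> 1) (at_right (0::real))" by simp
  have *: "1 - K * \<delta> \<le> a_delta \<nu> \<delta> b \<theta> (\<delta>*\<theta>*x) \<and> a_delta \<nu> \<delta> b \<theta> (\<delta>*\<theta>*x) \<le> 1"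
    if d: "\<delta> > 0" "\<bar>\<delta>*\<theta>*x\<bar> \<le> pi" for \<delta>
  proof -
    have dt: "\<delta>*\<theta> > 0" using d assms by simp
    have gs: "g_star \<nu> (\<delta>*\<theta>) (\<delta>*\<theta>*x) = C / (\<delta>*\<theta>) * P"
      using g_star_scale[OF dt, of \<nu> x] unfolding C_def P_def by simp
    have gp: "g_star \<nu> (\<delta>*\<theta>) (\<delta>*\<theta>*x) > 0" unfolding gs using C P dt by simp
    have "1 - a_delta \<nu> \<delta> b \<theta> (\<delta>*\<theta>*x) \<le> (1/(2*pi)) / (b * (C / (\<delta>*\<theta>) * P))"
      using a_bounds(3)[OF dt assms(1) d(2) assms(2) gp] unfolding gs .
    also have "\<dots> = K * \<delta>" unfolding K_def using C P d assms by (simp add: field_simps)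
    finally show ?thesis using a_bounds(2)[OF dt assms(1) d(2) assms(2)] by simp
  qed
  show "\<forall>\<^sub>F \<delta> in at_right 0. 1 - K * \<delta> \<le> a_delta \<nu> \<delta> b \<theta> (\<delta>*\<theta>*x)"
    using ev_small[OF assms(3), of x] by eventually_elim (use * in blast)
  show "\<forall>\<^sub>F \<delta> in at_right 0. a_delta \<nu> \<delta> b \<theta> (\<delta>*\<theta>*x) \<le> 1"
    using ev_small[OF assms(3), of x] by eventually_elim (use * in blast)
qed


lemma filterlim_int_segments:
  "filterlim (\<lambda>n::nat. {-int n..int n}) (finite_subsets_at_top (UNIV::int set)) sequentially"
  unfolding filterlim_finite_subsets_at_top
proof safe
  fix X :: "int set" assume X: "finite X"
  then have "finite ((\<lambda>k. nat \<bar>k\<bar>) ` X)" by simp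
  then obtain m where m: "\<forall>y \<in> (\<lambda>k. nat \<bar>k\<bar>) ` X. y < m" using finite_nat_set_iff_bounded by blast
  show "\<forall>\<^sub>F n in sequentially. finite {-int n..int n} \<and> X \<subseteq> {-int n..int n} \<and> {-int n..int n} \<subseteq> UNIV"
    using eventually_ge_at_top[of m]
  proof eventually_elim
    case (elim n)
    have "X \<subseteq> {-int n..int n}"
    proof
      fix k assume "k \<in> X"
      then have "nat \<bar>k\<bar> < m" using m by auto
      then show "k \<in> {-int n..int n}" using elim by auto
    qed
    then show ?case by simp
  qed
qed

lemma partial_sums_lim:
  assumes "(f has_sum S) (UNIV::int set)"
  shows "(\<lambda>n::nat. sum f {-int n..int n}) \<longlonglongrightarrow> S"
  using assms unfolding has_sum_def by (rule filterlim_compose[OF _ filterlim_int_segments])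

lemma a_meas:
  assumes "\<nu> > 1/2" "b > 0" "\<delta>*\<theta> > 0"
  shows "(\<lambda>l. indicator {-pi..pi} l * (a_delta \<nu> \<delta> b \<theta> l)^p) \<in> borel_measurable borel"
proof (rule borel_measurable_LIMSEQ_real)
  define Gn where "Gn n l = (\<Sum>k\<in>{-int n..int n}. g_star \<nu> (\<delta>*\<theta>) (l + 2 * of_int k * pi))" for n l
  define u where "u n l = indicator {-pi..pi} l * (b * Gn n l / (b * Gn n l + 1/(2*pi)))^p" for n l
  show "\<And>n. u n \<in> borel_measurable borel"
    unfolding u_def Gn_def g_star_def by measurable
  fix l :: real
  show "(\<lambda>n. u n l) \<longlonglongrightarrow> indicator {-pi..pi} l * (a_delta \<nu> \<delta> b \<theta> l)^p"
  proof (cases "l \<in> {-pi..pi}")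
    case False then show ?thesis unfolding u_def by simp
  next
    case True
    then have l: "\<bar>l\<bar> \<le> pi" by auto
    have G: "(\<lambda>n. Gn n l) \<longlonglongrightarrow> g_delta \<nu> \<delta> \<theta> l"
      unfolding Gn_def g_delta_def
      by (rule partial_sums_lim[OF has_sum_infsum[OF summ_terms[OF assms(3,1) l]]])
    have g0: "g_delta \<nu> \<delta> \<theta> l \<ge> 0"
    proof -
      have "0 \<le> g_star \<nu> (\<delta>*\<theta>) l" by (rule g_star_nonneg) (use assms in auto)
      then show ?thesis using g_delta_ge[OF assms(3,1) l] by linarith
    qed
    have den: "b * g_delta \<nu> \<delta> \<theta> l + 1/(2*pi) \<noteq> 0"
      using g0 assms(2) by (smt (verit) mult_nonneg_nonneg pi_gt_zero divide_pos_pos)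
    have "(\<lambda>n. indicator {-pi..pi} l * (b * Gn n l / (b * Gn n l + 1/(2*pi)))^p) \<longlonglongrightarrow>
          indicator {-pi..pi} l * (b * g_delta \<nu> \<delta> \<theta> l / (b * g_delta \<nu> \<delta> \<theta> l + 1/(2*pi)))^p"
      by (intro tendsto_intros G den)
    then show ?thesis unfolding u_def a_delta_def .
  qed
qed


lemma change_var:
  assumes "\<delta>*\<theta> > 0"
  shows "(LBINT l=-pi..pi. (a_delta \<nu> \<delta> b \<theta> l)^p * F (l / (\<delta>*\<theta>))) =
    \<delta>*\<theta> * (\<integral>x. indicator {-pi..pi} (\<delta>*\<theta>*x) * (a_delta \<nu> \<delta> b \<theta> (\<delta>*\<theta>*x))^p * F x \<partial>lborel)"
proof -
  have "(LBINT l=-pi..pi. (a_delta \<nu> \<delta> b \<theta> l)^p * F (l / (\<delta>*\<theta>))) =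
        (LBINT l:{-pi..pi}. (a_delta \<nu> \<delta> b \<theta> l)^p * F (l / (\<delta>*\<theta>)))"
    by (rule interval_integral_Icc) simp
  also have "\<dots> = (\<integral>l. indicator {-pi..pi} l * (a_delta \<nu> \<delta> b \<theta> l)^p * F (l / (\<delta>*\<theta>)) \<partial>lborel)"
    unfolding set_lebesgue_integral_def by (simp add: mult.assoc)
  also have "\<dots> = \<bar>\<delta>*\<theta>\<bar> *\<^sub>R (\<integral>x. indicator {-pi..pi} (0 + \<delta>*\<theta>*x) * (a_delta \<nu> \<delta> b \<theta> (0 + \<delta>*\<theta>*x))^p * F ((0 + \<delta>*\<theta>*x) / (\<delta>*\<theta>)) \<partial>lborel)"
    using assms by (intro lborel_integral_real_affine) auto
  also have "\<dots> = \<delta>*\<theta> * (\<integral>x. indicator {-pi..pi} (\<delta>*\<theta>*x) * (a_delta \<nu> \<delta> b \<theta> (\<delta>*\<theta>*x))^p * F x \<partial>lborel)"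
  proof -
    have e: "\<And>x. (0 + \<delta>*\<theta>*x)/(\<delta>*\<theta>) = x" using assms by auto
    have e2: "\<And>x. (\<delta>*\<theta>*x)/(\<delta>*\<theta>) = x" using assms by auto
    show ?thesis by (simp only: e2 add_0_left abs_of_pos[OF assms] real_scaleR_def)
  qed
  finally show ?thesis .
qed


lemma J_lim:
  assumes nu: "\<nu> > 1/2" and b: "b > 0" and th: "\<theta> > 0"
    and Fint: "integrable lborel F" and F0: "\<And>x. F x \<ge> 0"
  shows "((\<lambda>\<delta>. \<integral>x. indicator {-pi..pi} (\<delta>*\<theta>*x) * (a_delta \<nu> \<delta> b \<theta> (\<delta>*\<theta>*x))^p * F x \<partial>lborel)
           \<longlongrightarrow> integral\<^sup>L lborel F) (at_right 0)"
proof -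
  define h where "h \<delta> x = indicator {-pi..pi} (\<delta>*\<theta>*x) * (a_delta \<nu> \<delta> b \<theta> (\<delta>*\<theta>*x))^p * F x" for \<delta> x
  define s where "s t x = (if t > 0 then h (inverse t) x else 0)" for t x
  have pt: "((\<lambda>\<delta>. h \<delta> x) \<longlongrightarrow> F x) (at_right 0)" for x
  proof -
    have "((\<lambda>\<delta>. (a_delta \<nu> \<delta> b \<theta> (\<delta>*\<theta>*x))^p * F x) \<longlongrightarrow> 1^p * F x) (at_right 0)"
      by (intro tendsto_intros a_lim[OF nu b th])
    then have lim: "((\<lambda>\<delta>. (a_delta \<nu> \<delta> b \<theta> (\<delta>*\<theta>*x))^p * F x) \<longlongrightarrow> F x) (at_right 0)" by simp
    show ?thesis
    proof (rule tendsto_cong[THEN iffD1, OF _ lim])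
      show "\<forall>\<^sub>F \<delta> in at_right 0. (a_delta \<nu> \<delta> b \<theta> (\<delta>*\<theta>*x))^p * F x = h \<delta> x"
        using ev_small[OF th, of x] by eventually_elim (auto simp: h_def indicator_def abs_le_iff)
    qed
  qed
  have Fm: "F \<in> borel_measurable lborel" using Fint by (rule borel_measurable_integrable)
  have hm: "h \<delta> \<in> borel_measurable lborel" if "\<delta> > 0" for \<delta>
  proof -
    have dt: "\<delta>*\<theta> > 0" using that th by simp
    have m: "(\<lambda>l. indicator {-pi..pi} l * (a_delta \<nu> \<delta> b \<theta> l)^p) \<in> borel_measurable borel"
      by (rule a_meas[OF nu b dt])
    have c: "(\<lambda>x. \<delta>*\<theta>*x) \<in> measurable lborel borel" by simp
    have "(\<lambda>x. (\<lambda>l. indicator {-pi..pi} l * (a_delta \<nu> \<delta> b \<theta> l)^p) (\<delta>*\<theta>*x)) \<in> borel_measurable lborel"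
      by (rule measurable_compose[OF c m])
    then have "(\<lambda>x. (\<lambda>l. indicator {-pi..pi} l * (a_delta \<nu> \<delta> b \<theta> l)^p) (\<delta>*\<theta>*x) * F x) \<in> borel_measurable lborel"
      using Fm by (rule borel_measurable_times)
    then show ?thesis unfolding h_def by simp
  qed
  have bound: "norm (h \<delta> x) \<le> F x" if "\<delta> > 0" for \<delta> x
  proof (cases "\<delta>*\<theta>*x \<in> {-pi..pi}")
    case True
    have dt: "\<delta>*\<theta> > 0" using that th by simp
    have l: "\<bar>\<delta>*\<theta>*x\<bar> \<le> pi" using True by auto
    have a0: "0 \<le> a_delta \<nu> \<delta> b \<theta> (\<delta>*\<theta>*x)" and a1: "a_delta \<nu> \<delta> b \<theta> (\<delta>*\<theta>*x) \<le> 1"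
      using a_bounds[OF dt nu l b] by auto
    have p0: "0 \<le> (a_delta \<nu> \<delta> b \<theta> (\<delta>*\<theta>*x))^p" using a0 by simp
    have p1: "(a_delta \<nu> \<delta> b \<theta> (\<delta>*\<theta>*x))^p \<le> 1" using a0 a1 by (rule power_le_one)
    have "norm (h \<delta> x) = (a_delta \<nu> \<delta> b \<theta> (\<delta>*\<theta>*x))^p * F x"
      using True p0 F0[of x] by (simp add: h_def)
    also have "\<dots> \<le> 1 * F x" using p1 F0[of x] by (intro mult_right_mono) auto
    finally show ?thesis by simp
  next
    case False then show ?thesis using F0[of x] by (simp add: h_def)
  qed
  have "((\<lambda>t. integral\<^sup>L lborel (s t)) \<longlongrightarrow> integral\<^sup>L lborel F) at_top"
  proof (rule integral_dominated_convergence_at_top[where w=F])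
    show "F \<in> borel_measurable lborel" by (rule Fm)
    show "integrable lborel F" by (rule Fint)
    fix t :: real
    show "s t \<in> borel_measurable lborel"
    proof (cases "t > 0")
      case True
      then have "s t = h (inverse t)" by (simp add: s_def fun_eq_iff)
      then show ?thesis using hm[of "inverse t"] True by simp
    next
      case False
      then have "s t = (\<lambda>x. 0)" by (simp add: s_def fun_eq_iff)
      then show ?thesis by simp
    qed
  next
    show "AE x in lborel. ((\<lambda>t. s t x) \<longlongrightarrow> F x) at_top"
    proof (rule AE_I2)
      fix x
      have "((\<lambda>t. h (inverse t) x) \<longlongrightarrow> F x) at_top"
        using pt[of x] by (simp add: filterlim_at_right_to_top)
      then show "((\<lambda>t. s t x) \<longlongrightarrow> F x) at_top"
        by (rule tendsto_cong[THEN iffD1, rotated])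
           (use eventually_gt_at_top[of "0::real"] in \<open>eventually_elim, simp add: s_def\<close>)
    qed
  next
    show "\<forall>\<^sub>F i in at_top. AE x in lborel. norm (s i x) \<le> F x"
      by (intro always_eventually allI AE_I2) (use bound F0 in \<open>auto simp: s_def\<close>)
  qed
  note lim0 = this
  have st: "t > 0 \<Longrightarrow> s t = h (inverse t)" for t by (simp add: s_def fun_eq_iff)
  have "((\<lambda>t. integral\<^sup>L lborel (h (inverse t))) \<longlongrightarrow> integral\<^sup>L lborel F) at_top"
  proof (rule tendsto_cong[THEN iffD1, OF _ lim0])
    show "\<forall>\<^sub>F t in at_top. integral\<^sup>L lborel (s t) = integral\<^sup>L lborel (h (inverse t))"
      using eventually_gt_at_top[of "0::real"] by eventually_elim (simp add: st)
  qed
  then have "((\<lambda>\<delta>. integral\<^sup>L lborel (h \<delta>)) \<longlongrightarrow> integral\<^sup>L lborel F) (at_right 0)"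
    by (simp add: filterlim_at_right_to_top)
  then show ?thesis unfolding h_def .
qed


lemma main_equiv:
  assumes nu: "\<nu> > 1/2" and b: "b > 0" and th: "\<theta> > 0"
    and Fint: "integrable lborel F" and F0: "\<And>x. F x \<ge> 0" and Fpos: "integral\<^sup>L lborel F > 0"
  shows "(\<lambda>\<delta>. LBINT l=-pi..pi. (a_delta \<nu> \<delta> b \<theta> l)^p * F (l / (\<delta>*\<theta>)))
            \<sim>[at_right 0] (\<lambda>\<delta>. \<delta> * \<theta> * integral\<^sup>L lborel F)"
proof (rule asymp_equivI')
  define J where "J \<delta> = (\<integral>x. indicator {-pi..pi} (\<delta>*\<theta>*x) * (a_delta \<nu> \<delta> b \<theta> (\<delta>*\<theta>*x))^p * F x \<partial>lborel)" for \<delta>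
  have "((\<lambda>\<delta>. J \<delta> / integral\<^sup>L lborel F) \<longlongrightarrow> integral\<^sup>L lborel F / integral\<^sup>L lborel F) (at_right 0)"
    unfolding J_def by (intro tendsto_divide J_lim[OF nu b th Fint F0] tendsto_const) (use Fpos in auto)
  then have lim: "((\<lambda>\<delta>. J \<delta> / integral\<^sup>L lborel F) \<longlongrightarrow> 1) (at_right 0)" using Fpos by simp
  show "((\<lambda>\<delta>. (LBINT l=-pi..pi. (a_delta \<nu> \<delta> b \<theta> l)^p * F (l / (\<delta>*\<theta>))) / (\<delta> * \<theta> * integral\<^sup>L lborel F)) \<longlongrightarrow> 1) (at_right 0)"
  proof (rule tendsto_cong[THEN iffD1, OF _ lim])
    show "\<forall>\<^sub>F \<delta> in at_right 0. J \<delta> / integral\<^sup>L lborel F =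
      (LBINT l=-pi..pi. (a_delta \<nu> \<delta> b \<theta> l)^p * F (l / (\<delta>*\<theta>))) / (\<delta> * \<theta> * integral\<^sup>L lborel F)"
      using ev_small[OF th, of 0]
    proof eventually_elim
      case (elim \<delta>)
      then have dt: "\<delta>*\<theta> > 0" using th by simp
      have eq: "(LBINT l=-pi..pi. (a_delta \<nu> \<delta> b \<theta> l)^p * F (l / (\<delta>*\<theta>))) = \<delta>*\<theta> * J \<delta>"
        unfolding change_var[OF dt] J_def ..
      have "\<delta> \<noteq> 0" "\<theta> \<noteq> 0" using elim th by auto
      then show ?case unfolding eq by simp
    qed
  qed
qed

theorem lemma5p3:
  fixes \<nu> b \<theta> :: real and F :: "real \<Rightarrow> real"
  assumes "\<nu> > 1/2" and "b > 0" and "\<theta> > 0"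
    and "continuous_on UNIV F" and "\<And>x. F x \<ge> 0"
    and "integrable lborel F" and "integral\<^sup>L lborel F > 0"
  shows "((\<lambda>\<delta>. LBINT l=-pi..pi. a_delta \<nu> \<delta> b \<theta> l * F (l / (\<delta>*\<theta>)))
            \<sim>[at_right 0] (\<lambda>\<delta>. \<delta> * \<theta> * integral\<^sup>L lborel F)) \<and>
         ((\<lambda>\<delta>. LBINT l=-pi..pi. (a_delta \<nu> \<delta> b \<theta> l)^2 * F (l / (\<delta>*\<theta>)))
            \<sim>[at_right 0] (\<lambda>\<delta>. \<delta> * \<theta> * integral\<^sup>L lborel F))"
  using main_equiv[OF assms(1,2,3,6,5,7), of 1] main_equiv[OF assms(1,2,3,6,5,7), of 2] by simp

end
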